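(* Assume $V=W$, that $\mathcal{A}$ is coercive, i.e. there is $\alpha>0$ with $\alpha\|\phi\|_W^2\le \mathcal{A}(\phi,\phi)$ for all $\phi\in W$, and that $W_\theta\cup S_\theta\subseteq V_\eta$. Let $(w^n_\theta)_{n\ge1}\subset W_\theta$ be a minimizing sequence, i.e. $\lim_{n\to\infty}\|u-w^n_\theta\|_{op,\eta}=\sigma^*:=\inf_{w_\theta\in W_\theta}\|u-w_\theta\|_{op,\eta}$. Then $(w^n_\theta)$ has a subsequence converging weakly in $W$ to some $u^*_\theta\in \mathrm{cl}^{seq}_w(W_\theta)$, and every such weak limit satisfies $$\|u-u^*_\theta\|_{op,\eta}\le \inf_{w_\theta\in W_\theta}\|u-w_\theta\|_{op,\eta}.$$
   Context: $W$ and $V$ are reflexive separable real Banach spaces. $\mathcal{A}:W\times V\to\mathbb{R}$ is a bilinear form with $\mathcal{A}(w,v)\le M\|w\|_W\|v\|_V$ for all $w\in W,v\in V$, and $\mathcal{F}:V\to\mathbb{R}$ is a bounded linear functional. It is assumed that there is a unique $u\in W$ with $\mathcal{A}(u,v)=\mathcal{F}(v)$ for all $v\in V$. $W_\theta\subseteq W$ and $V_\eta\subseteq V$ are arbitrary subsets ("function classes", e.g. neural network classes), with $V_\eta$ containing an element of nonzero norm. For $w\in W$, $\|w\|_{op,\eta}:=\sup_{v_\eta\in V_\eta,\ \|v_\eta\|_V\neq0}\mathcal{A}(w,v_\eta)/\|v_\eta\|_V$. $S_\theta:=\{w_1-w_2:\ w_1,w_2\in W_\theta\}$. $\mathrm{cl}^{seq}_w(W_\theta)\subseteq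 W$ denotes the weak sequential closure of $W_\theta$ in $W$, i.e. the set of all weak limits in $W$ of sequences of elements of $W_\theta$. *)

theory Defs
  imports "HOL-Analysis.Analysis" "HOL-Library.Extended_Real"
begin

definition weak_conv :: "(nat \<Rightarrow> 'a::real_normed_vector) \<Rightarrow> 'a \<Rightarrow> bool" where
  "weak_conv x L \<longleftrightarrow> (\<forall>f::'a \<Rightarrow> real. bounded_linear f \<longrightarrow> (\<lambda>n. f (x n)) \<longlonglongrightarrow> f L)"

definition weak_seq_closure :: "'a::real_normed_vector set \<Rightarrow> 'a set" where
  "weak_seq_closure S = {x. \<exists>s. (\<forall>n. s n \<in> S) \<and> weak_conv s x}"

definition reflexive_space :: "'a::real_normed_vector itself \<Rightarrow> bool" where
  "reflexive_space _ \<longleftrightarrow>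
     (\<forall>\<phi> :: ('a \<Rightarrow>\<^sub>L real) \<Rightarrow>\<^sub>L real. \<exists>x::'a. \<forall>f. blinfun_apply \<phi> f = blinfun_apply f x)"

definition separable_space :: "'a::real_normed_vector itself \<Rightarrow> bool" where
  "separable_space _ \<longleftrightarrow> (\<exists>D::'a set. countable D \<and> closure D = UNIV)"

definition op_norm_eta :: "('a \<Rightarrow> 'b::real_normed_vector \<Rightarrow> real) \<Rightarrow> 'b set \<Rightarrow> 'a \<Rightarrow> real" where
  "op_norm_eta A V\<^sub>\<eta> w = (SUP v\<in>{v\<in>V\<^sub>\<eta>. norm v \<noteq> 0}. A w v / norm v)"

definition diff_set :: "'a::ab_group_add set \<Rightarrow> 'a set" where
  "diff_set W = {w1 - w2 | w1 w2. w1 \<in> W \<and> w2 \<in> W}"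

end

theory Submission imports Defs "HOL-Library.Diagonal_Subsequence" begin

locale coer_form =
  fixes A :: "'a::banach \<Rightarrow> 'a \<Rightarrow> real" and \<alpha> :: real
  assumes bb: "bounded_bilinear A"
    and apos: "\<alpha> > 0"
    and coer: "\<And>\<phi>. \<alpha> * (norm \<phi>)\<^sup>2 \<le> A \<phi> \<phi>"
begin

interpretation A: bounded_bilinear A by (rule bb)

lemma quad_nonneg: "\<And>t c b::real. (\<forall>t. t * c + t^2 * b \<ge> 0) \<Longrightarrow> b \<ge> 0 \<Longrightarrow> c = 0"
proof -
  fix t c b :: real
  assume h: "\<forall>t. t * c + t^2 * b \<ge> 0" and b: "b \<ge> 0"
  show "c = 0"
  proof (rule ccontr)
    assume c: "c \<noteq> 0"
    define t where "t = - c / (b+1)"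
    have "t * c + t^2 * b = - (c^2)/(b+1)^2"
      using b unfolding t_def
      apply (simp add: power2_eq_square)
      apply (simp add: divide_simps)
      by (simp add: algebra_simps)
    also have "\<dots> < 0" using c b by simp
    finally show False using h by smt
  qed
qed

lemma riesz:
  assumes f: "bounded_linear f"
  shows "\<exists>z. \<forall>y. f y = A z y + A y z"
proof -
  interpret f: bounded_linear f by (rule f)
  obtain Kf where Kf: "\<And>y. norm (f y) \<le> norm y * Kf" "Kf > 0" using f.pos_bounded by blast
  define J where "J y = A y y - f y" for y
  have Jlow: "J y \<ge> - (Kf^2) / (4*\<alpha>)" for y
  proof -
    have "J y \<ge> \<alpha> * (norm y)^2 - norm y * Kf"
      using coer[of y] Kf(1)[of y] unfolding J_def by (smt (verit) real_norm_def abs_le_iff)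
    moreover have "\<alpha> * (norm y)^2 - norm y * Kf \<ge> - (Kf^2) / (4*\<alpha>)"
    proof -
      have "0 \<le> (2*\<alpha>*norm y - Kf)^2" by simp
      hence "0 \<le> 4*\<alpha>*(\<alpha> * (norm y)^2 - norm y * Kf) + Kf^2"
        by (simp add: power2_eq_square algebra_simps)
      thus ?thesis using apos by (simp add: field_simps)
    qed
    ultimately show ?thesis by linarith
  qed
  define m where "m = Inf (range J)"
  have bdd: "bdd_below (range J)" using Jlow by (intro bdd_belowI[of _ "- (Kf^2) / (4*\<alpha>)"]) auto
  have m_le: "m \<le> J y" for y unfolding m_def using bdd by (simp add: cInf_lower)
  have "\<exists>y. J y < m + 1/(real n + 1)" for n
  proof -
    have "Inf (range J) < m + 1/(real n+1)" unfolding m_def by simp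
    then show ?thesis by (subst (asm) cInf_less_iff) (use bdd in auto)
  qed
  then obtain y where y: "\<And>n. J (y n) < m + 1/(real n + 1)" by metis
  have par: "J p + J q - 2 * J ((1/2) *\<^sub>R (p+q)) = (1/2) * A (p-q) (p-q)" for p q
    unfolding J_def
    by (simp add: A.add_left A.add_right A.diff_left A.diff_right A.scaleR_left A.scaleR_right
        f.add f.scaleR algebra_simps)
  have close: "\<alpha>/2 * (norm (p - q))^2 \<le> J p + J q - 2*m" for p q
  proof -
    have "\<alpha>/2 * (norm (p - q))^2 \<le> (1/2) * A (p-q) (p-q)" using coer[of "p-q"] by simp
    also have "\<dots> = J p + J q - 2 * J ((1/2) *\<^sub>R (p+q))" by (rule par[symmetric])
    also have "\<dots> \<le> J p + J q - 2*m" using m_le[of "(1/2) *\<^sub>R (p+q)"] by simp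
    finally show ?thesis .
  qed
  have "Cauchy y"
  proof (rule CauchyI)
    fix e :: real assume e: "e > 0"
    obtain N :: nat where N: "real N > 4 / (\<alpha> * e^2)" using reals_Archimedean2 by blast
    have "\<forall>m'\<ge>N. \<forall>n\<ge>N. norm (y m' - y n) < e"
    proof (intro allI impI)
      fix m' n assume mn: "m' \<ge> N" "n \<ge> N"
      have Npos: "real N > 0" 
      proof -
        have "4/(\<alpha>*e^2) > 0" using apos e by simp
        thus ?thesis using N by linarith
      qed
      have i1: "1/(real m'+1) < 1/real N" using mn Npos by (simp add: frac_less2)
      have i2: "1/(real n+1) < 1/real N" using mn Npos by (simp add: frac_less2)
      have "\<alpha>/2 * (norm (y m' - y n))^2 < 2 / real N"
        using close[of "y m'" "y n"] y[of m'] y[of n] i1 i2 by linarith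
      also have "2 / real N < \<alpha>/2 * e^2"
        using N Npos apos e by (simp add: field_simps)
      finally have "(norm (y m' - y n))^2 < e^2" using apos by simp
      thus "norm (y m' - y n) < e" using e by (simp add: power_less_imp_less_base)
    qed
    thus "\<exists>M. \<forall>m'\<ge>M. \<forall>n\<ge>M. norm (y m' - y n) < e" by blast
  qed
  then obtain z where yz: "y \<longlonglongrightarrow> z" using Cauchy_convergent_iff convergent_def by blast
  have "(\<lambda>n. J (y n)) \<longlonglongrightarrow> J z"
    unfolding J_def by (intro tendsto_intros A.tendsto f.tendsto yz)
  moreover have "(\<lambda>n. J (y n)) \<longlonglongrightarrow> m"
  proof (rule tendsto_sandwich[of "\<lambda>n. m" _ _ "\<lambda>n. m + 1/(real n + 1)"])
    show "\<forall>\<^sub>F n in sequentially. m \<le> J (y n)" using m_le by simp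
    show "\<forall>\<^sub>F n in sequentially. J (y n) \<le> m + 1 / (real n + 1)" by (intro always_eventually allI less_imp_le y)
    show "(\<lambda>n. m) \<longlonglongrightarrow> m" by simp
    have "(\<lambda>n. m + inverse (real (Suc n))) \<longlonglongrightarrow> m"
      by (rule LIMSEQ_inverse_real_of_nat_add)
    then show "(\<lambda>n. m + 1 / (real n + 1)) \<longlonglongrightarrow> m" by (simp add: inverse_eq_divide add.commute)
  qed
  ultimately have Jz: "J z = m" using LIMSEQ_unique by blast
  show ?thesis
  proof (intro exI allI)
    fix v
    have "\<forall>t. t * (A z v + A v z - f v) + t^2 * A v v \<ge> 0"
    proof
      fix t :: real
      have "J (z + t *\<^sub>R v) - J z = t * (A z v + A v z - f v) + t^2 * A v v"
        unfolding J_def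
        by (simp add: A.add_left A.add_right A.scaleR_left A.scaleR_right f.add f.scaleR
            algebra_simps power2_eq_square)
      thus "t * (A z v + A v z - f v) + t^2 * A v v \<ge> 0" using m_le[of "z + t *\<^sub>R v"] Jz by simp
    qed
    moreover have "A v v \<ge> 0" using coer[of v] apos by (smt (verit) mult_nonneg_nonneg zero_le_power2)
    ultimately have "A z v + A v z - f v = 0" by (rule quad_nonneg)
    thus "f v = A z v + A v z" by simp
  qed
qed


lemma weak_compact:
  fixes x :: "nat \<Rightarrow> 'a" and B :: real
  assumes sep: "separable_space TYPE('a)" and xb: "\<And>n. norm (x n) \<le> B"
  shows "\<exists>r z. strict_mono r \<and> weak_conv (x \<circ> r) z"
proof -
  define a where "a p q = A p q + A q p" for p q
  obtain K where K: "K > 0" "\<And>p q. norm (A p q) \<le> norm p * norm q * K" using A.pos_bounded by blast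
  have aK: "\<bar>a p q\<bar> \<le> 2 * K * norm p * norm q" for p q
    using K(2)[of p q] K(2)[of q p] unfolding a_def by (simp add: algebra_simps)
  have a_sym: "a p q = a q p" for p q unfolding a_def by simp
  have a_diff: "a p (q - q') = a p q - a p q'" for p q q'
    unfolding a_def by (simp add: A.diff_left A.diff_right)
  have a_add: "a p (q + q') = a p q + a p q'" for p q q'
    unfolding a_def by (simp add: A.add_left A.add_right)
  have a_scale: "a p (c *\<^sub>R q) = c * a p q" for p q c
    unfolding a_def by (simp add: A.scaleR_left A.scaleR_right algebra_simps)
  have B0: "B \<ge> 0" using xb[of 0] norm_ge_zero[of "x 0"] by linarith
  obtain D :: "'a set" where D: "countable D" "closure D = UNIV"
    using sep unfolding separable_space_def by blast
  have Dne: "D \<noteq> {}" using D(2) by auto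
  define d where "d = from_nat_into D"
  have dD: "range d = D" unfolding d_def using Dne D(1) by simp
  interpret S: subseqs "\<lambda>k s. convergent (\<lambda>i. a (x (s i)) (d k))"
  proof
    fix k and s :: "nat \<Rightarrow> nat" assume "strict_mono s"
    define g where "g i = a (x (s i)) (d k)" for i
    have "bounded (range g)"
      unfolding bounded_iff
    proof (intro exI ballI)
      fix t assume "t \<in> range g"
      then obtain i where "t = g i" by auto
      have "\<bar>g i\<bar> \<le> 2 * K * norm (x (s i)) * norm (d k)" unfolding g_def by (rule aK)
      also have "\<dots> \<le> 2 * K * B * norm (d k)"
        using xb[of "s i"] K(1) by (intro mult_right_mono mult_left_mono) auto
      finally show "norm t \<le> 2 * K * B * norm (d k)" using \<open>t = g i\<close> by simp
    qed
    then obtain l r where "strict_mono r" "(g \<circ> r) \<longlonglongrightarrow> l"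
      using bounded_imp_convergent_subsequence by blast
    thus "\<exists>r'. strict_mono r' \<and> convergent (\<lambda>i. a (x ((s \<circ> r') i)) (d k))"
      unfolding convergent_def g_def o_def by blast
  qed
  define xs where "xs = x \<circ> S.diagseq"
  have conv_d: "convergent (\<lambda>i. a (xs i) (d k))" for k
  proof -
    have "convergent (\<lambda>i. a (x ((S.diagseq \<circ> (+) (Suc k)) i)) (d k))"
    proof (rule S.diagseq_holds)
      fix r s n assume "strict_mono (r::nat\<Rightarrow>nat)" "convergent (\<lambda>i. a (x (s i)) (d n))"
      from convergent_subseq_convergent[OF this(2) this(1)]
      show "convergent (\<lambda>i. a (x ((s \<circ> r) i)) (d n))" by (simp add: o_def)
    qed
    hence "convergent (\<lambda>i. a (xs (i + Suc k)) (d k))"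
      unfolding xs_def by (simp add: o_def add.commute)
    thus ?thesis using convergent_ignore_initial_segment[of "\<lambda>i. a (xs i) (d k)" "Suc k"] by simp
  qed
  have conv: "convergent (\<lambda>i. a (xs i) y)" for y
  proof -
    have "Cauchy (\<lambda>i. a (xs i) y)"
    proof (rule CauchyI)
      fix e :: real assume e: "e > 0"
      define \<delta> where "\<delta> = e / (3 * (2 * K * B + 1))"
      have dpos: "\<delta> > 0" proof -
        have "0 \<le> K * B" using K(1) B0 by simp
        thus ?thesis unfolding \<delta>_def using e by (intro divide_pos_pos) auto
      qed
      have "y \<in> closure D" using D(2) by simp
      then obtain q where q: "q \<in> D" "dist q y < \<delta>" using dpos closure_approachable by blast
      then obtain k where qk: "q = d k" using dD by auto
      have "Cauchy (\<lambda>i. a (xs i) (d k))" using conv_d Cauchy_convergent_iff by blast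
      then obtain N where N: "\<forall>m\<ge>N. \<forall>n\<ge>N. norm (a (xs m) (d k) - a (xs n) (d k)) < e/3"
        using CauchyD[of _ "e/3"] e by fastforce
      have small: "\<bar>a (xs i) (y - d k)\<bar> \<le> e/3" for i
      proof -
        have "\<bar>a (xs i) (y - d k)\<bar> \<le> 2 * K * norm (xs i) * norm (y - d k)" by (rule aK)
        also have "\<dots> \<le> 2 * K * B * \<delta>"
          using xb[of "S.diagseq i"] K(1) q(2) qk B0 unfolding xs_def
          by (intro mult_mono) (auto simp: dist_norm norm_minus_commute)
        also have "\<dots> \<le> e/3"
        proof -
          have c0: "0 \<le> 2*K*B" using K(1) B0 by simp
          have "2*K*B*\<delta> = (e/3) * ((2*K*B)/(2*K*B+1))"
            unfolding \<delta>_def using c0 by (simp add: field_simps)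
          also have "\<dots> \<le> (e/3) * 1"
          proof (intro mult_left_mono)
            show "2*K*B/(2*K*B+1) \<le> 1" using c0 by (subst divide_le_eq_1) linarith
          qed (use e in simp)
          finally show ?thesis by simp
        qed
        finally show ?thesis .
      qed
      show "\<exists>M. \<forall>m\<ge>M. \<forall>n\<ge>M. norm (a (xs m) y - a (xs n) y) < e"
      proof (intro exI allI impI)
        fix m n assume mn: "m \<ge> N" "n \<ge> N"
        have "a (xs m) y - a (xs n) y = a (xs m) (y - d k) + (a (xs m) (d k) - a (xs n) (d k)) - a (xs n) (y - d k)"
          by (simp add: a_diff)
        moreover have "\<bar>a (xs m) (d k) - a (xs n) (d k)\<bar> < e/3" using N mn by auto
        ultimately show "norm (a (xs m) y - a (xs n) y) < e"
          using small[of m] small[of n] unfolding real_norm_def by linarith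
      qed
    qed
    thus ?thesis using Cauchy_convergent_iff by blast
  qed
  define g where "g y = lim (\<lambda>i. a (xs i) y)" for y
  have g_lim: "(\<lambda>i. a (xs i) y) \<longlonglongrightarrow> g y" for y
    unfolding g_def using conv convergent_LIMSEQ_iff by blast
  have "bounded_linear g"
  proof (rule bounded_linear_intro[where K = "2 * K * B"])
    fix y1 y2
    have "(\<lambda>i. a (xs i) (y1 + y2)) \<longlonglongrightarrow> g y1 + g y2"
      unfolding a_add by (intro tendsto_add g_lim)
    thus "g (y1 + y2) = g y1 + g y2" using g_lim LIMSEQ_unique by blast
  next
    fix c y
    have "(\<lambda>i. a (xs i) (c *\<^sub>R y)) \<longlonglongrightarrow> c *\<^sub>R g y"
      unfolding a_scale by (simp, intro tendsto_mult g_lim tendsto_const)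
    thus "g (c *\<^sub>R y) = c *\<^sub>R g y" using g_lim LIMSEQ_unique by blast
  next
    fix y
    have "(\<lambda>i. norm (a (xs i) y)) \<longlonglongrightarrow> norm (g y)" by (intro tendsto_norm g_lim)
    moreover have "\<forall>n\<ge>0. norm (a (xs n) y) \<le> norm y * (2 * K * B)"
    proof (intro allI impI)
      fix n
      have "\<bar>a (xs n) y\<bar> \<le> 2 * K * norm (xs n) * norm y" by (rule aK)
      also have "\<dots> \<le> 2 * K * B * norm y"
        using xb[of "S.diagseq n"] K(1) unfolding xs_def
        by (intro mult_right_mono mult_left_mono) auto
      finally show "norm (a (xs n) y) \<le> norm y * (2 * K * B)" by (simp add: algebra_simps)
    qed
    ultimately show "norm (g y) \<le> norm y * (2 * K * B)" by (intro LIMSEQ_le_const2) blast+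
  qed
  then obtain z where z: "\<And>y. g y = a z y" using riesz unfolding a_def by blast
  have "weak_conv xs z"
    unfolding weak_conv_def
  proof (intro allI impI)
    fix f :: "'a \<Rightarrow> real" assume "bounded_linear f"
    then obtain zf where zf: "\<And>y. f y = a zf y" using riesz unfolding a_def by blast
    have "(\<lambda>i. a (xs i) zf) \<longlonglongrightarrow> g zf" by (rule g_lim)
    moreover have "g zf = f z" using z zf a_sym by simp
    ultimately show "(\<lambda>n. f (xs n)) \<longlonglongrightarrow> f z" using zf a_sym by simp
  qed
  thus ?thesis using S.subseq_diagseq unfolding xs_def by blast
qed

end

lemma bb_from:
  fixes A :: "'a::real_normed_vector \<Rightarrow> 'a \<Rightarrow> real"
  assumes bilin1: "\<And>x. linear (A x)"
    and bilin2: "\<And>y. linear (\<lambda>x. A x y)"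
    and bounded: "\<And>x y. A x y \<le> M * norm x * norm y"
  shows "bounded_bilinear A" and "\<And>x y. \<bar>A x y\<bar> \<le> M * norm x * norm y"
proof -
  show ab: "\<bar>A x y\<bar> \<le> M * norm x * norm y" for x y
  proof -
    have "A (-x) y = - A x y" using linear_neg[OF bilin2[of y]] by simp
    thus ?thesis using bounded[of x y] bounded[of "-x" y] by simp
  qed
  show "bounded_bilinear A"
  proof
    show "A (a + a') b = A a b + A a' b" for a a' b using linear_add[OF bilin2[of b]] by simp
    show "A a (b + b') = A a b + A a b'" for a b b' using linear_add[OF bilin1[of a]] by simp
    show "A (r *\<^sub>R a) b = r *\<^sub>R A a b" for r a b using linear_scale[OF bilin2[of b]] by simp
    show "A a (r *\<^sub>R b) = r *\<^sub>R A a b" for r a b using linear_scale[OF bilin1[of a]] by simp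
    show "\<exists>K. \<forall>a b. norm (A a b) \<le> norm a * norm b * K"
      using ab by (intro exI[of _ M]) (simp add: algebra_simps)
  qed
qed

theorem lemma1:
  fixes A :: "'a::banach \<Rightarrow> 'a \<Rightarrow> real"
    and F :: "'a \<Rightarrow> real"
    and u :: 'a
    and M \<alpha> :: real
    and W\<^sub>\<theta> V\<^sub>\<eta> :: "'a set"
    and w :: "nat \<Rightarrow> 'a"
  assumes refl: "reflexive_space TYPE('a)"
    and sep: "separable_space TYPE('a)"
    and bilin1: "\<And>x. linear (A x)"
    and bilin2: "\<And>y. linear (\<lambda>x. A x y)"
    and bounded: "\<And>x y. A x y \<le> M * norm x * norm y"
    and F_lin: "bounded_linear F"
    and u_sol: "\<And>v. A u v = F v"
    and u_uniq: "\<And>u'. (\<forall>v. A u' v = F v) \<Longrightarrow> u' = u"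
    and alpha_pos: "\<alpha> > 0"
    and coercive: "\<And>\<phi>. \<alpha> * (norm \<phi>)\<^sup>2 \<le> A \<phi> \<phi>"
    and V_nonzero: "\<exists>v\<in>V\<^sub>\<eta>. norm v \<noteq> 0"
    and subset: "W\<^sub>\<theta> \<union> diff_set W\<^sub>\<theta> \<subseteq> V\<^sub>\<eta>"
    and w_in: "\<And>n. w n \<in> W\<^sub>\<theta>"
    and minimizing: "(\<lambda>n. ereal (op_norm_eta A V\<^sub>\<eta> (u - w n)))
                      \<longlonglongrightarrow> (INF x\<in>W\<^sub>\<theta>. ereal (op_norm_eta A V\<^sub>\<eta> (u - x)))"
  shows "(\<exists>r u\<^sub>s. strict_mono r \<and> u\<^sub>s \<in> weak_seq_closure W\<^sub>\<theta> \<and> weak_conv (w \<circ> r) u\<^sub>s)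
       \<and> (\<forall>r u\<^sub>s. strict_mono r \<and> weak_conv (w \<circ> r) u\<^sub>s \<longrightarrow>
            ereal (op_norm_eta A V\<^sub>\<eta> (u - u\<^sub>s)) \<le> (INF x\<in>W\<^sub>\<theta>. ereal (op_norm_eta A V\<^sub>\<eta> (u - x))))"
proof -
  have bb: "bounded_bilinear A" and absA: "\<And>x y. \<bar>A x y\<bar> \<le> M * norm x * norm y"
    using bb_from[OF bilin1 bilin2 bounded] by auto
  interpret A: bounded_bilinear A by (rule bb)
  interpret C: coer_form A \<alpha> using bb alpha_pos coercive by unfold_locales auto
  define ON where "ON = op_norm_eta A V\<^sub>\<eta>"
  define Vs where "Vs = {v\<in>V\<^sub>\<eta>. norm v \<noteq> 0}"
  have ON_eq: "ON x = (SUP v\<in>Vs. A x v / norm v)" for x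
    unfolding ON_def op_norm_eta_def Vs_def by simp
  have Vs_ne: "Vs \<noteq> {}" using V_nonzero unfolding Vs_def by auto
  have elem_le: "A x v / norm v \<le> M * norm x" if "v \<in> Vs" for x v
  proof -
    have nv: "norm v > 0" using that unfolding Vs_def by auto
    have "A x v \<le> M * norm x * norm v" by (rule bounded)
    thus ?thesis using nv by (simp add: divide_le_eq)
  qed
  have bdd: "bdd_above ((\<lambda>v. A x v / norm v) ` Vs)" for x
    using elem_le by (intro bdd_aboveI2[of _ _ "M * norm x"]) auto
  have L1: "A x v / norm v \<le> ON x" if "v \<in> Vs" for x v
    unfolding ON_eq using bdd that by (rule cSUP_upper2) simp
  have L3: "ON (x + y) \<le> ON x + ON y" for x y
    unfolding ON_eq[of "x+y"]
  proof (rule cSUP_least[OF Vs_ne])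
    fix v assume v: "v \<in> Vs"
    have "A (x + y) v / norm v = A x v / norm v + A y v / norm v"
      by (simp add: A.add_left add_divide_distrib)
    thus "A (x + y) v / norm v \<le> ON x + ON y" using L1[OF v, of x] L1[OF v, of y] by simp
  qed
  have L4: "\<alpha> * norm d \<le> ON d" if "d \<in> V\<^sub>\<eta>" for d
  proof (cases "d = 0")
    case True
    from Vs_ne obtain v where "v \<in> Vs" by auto
    from L1[OF this, of 0] show ?thesis using True by (simp add: A.zero_left)
  next
    case False
    hence dV: "d \<in> Vs" using that unfolding Vs_def by simp
    have nd: "norm d > 0" using False by simp
    have "\<alpha> * norm d = \<alpha> * (norm d)^2 / norm d" using nd by (simp add: power2_eq_square)
    also have "\<dots> \<le> A d d / norm d" using coercive[of d] nd by (simp add: divide_right_mono)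
    also have "\<dots> \<le> ON d" by (rule L1[OF dV])
    finally show ?thesis .
  qed
  define I where "I = (INF x\<in>W\<^sub>\<theta>. ereal (ON (u - x)))"
  have mini: "(\<lambda>n. ereal (ON (u - w n))) \<longlonglongrightarrow> I" using minimizing unfolding I_def ON_def .
  have I_le: "I \<le> ereal (ON (u - w 0))" unfolding I_def using w_in[of 0] by (rule INF_lower)
  have "I < ereal (ON (u - w 0) + 1)" using I_le by (simp add: le_less_trans)
  from order_tendstoD(2)[OF mini this] obtain N where
    N: "\<And>n. n \<ge> N \<Longrightarrow> ON (u - w n) < ON (u - w 0) + 1"
    unfolding eventually_sequentially by auto
  define Bd where "Bd = norm (w 0) + (ON (u - w 0) + 1 + ON (w 0 - u)) / \<alpha>"
  have wb: "norm (w n) \<le> Bd" if "n \<ge> N" for n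
  proof -
    have "w 0 - w n \<in> diff_set W\<^sub>\<theta>" unfolding diff_set_def using w_in by blast
    hence "w 0 - w n \<in> V\<^sub>\<eta>" using subset by blast
    hence "\<alpha> * norm (w 0 - w n) \<le> ON (w 0 - w n)" by (rule L4)
    also have "\<dots> \<le> ON (u - w n) + ON (w 0 - u)" using L3[of "u - w n" "w 0 - u"] by simp
    also have "\<dots> \<le> ON (u - w 0) + 1 + ON (w 0 - u)" using N[OF that] by simp
    finally have "norm (w 0 - w n) \<le> (ON (u - w 0) + 1 + ON (w 0 - u)) / \<alpha>"
      using alpha_pos by (simp add: le_divide_eq mult.commute)
    moreover have "norm (w n) \<le> norm (w 0) + norm (w 0 - w n)"
      using norm_triangle_ineq4[of "w 0" "w 0 - w n"] by (simp add: norm_minus_commute)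
    ultimately show ?thesis unfolding Bd_def by simp
  qed
  obtain r z where r: "strict_mono r" and wc: "weak_conv ((\<lambda>n. w (n + N)) \<circ> r) z"
    using C.weak_compact[OF sep, of "\<lambda>n. w (n + N)" Bd] wb by auto
  define r' where "r' n = r n + N" for n
  have r': "strict_mono r'" using r unfolding r'_def strict_mono_def by simp
  have wc': "weak_conv (w \<circ> r') z" using wc unfolding r'_def o_def by simp
  have part1: "\<exists>r u\<^sub>s. strict_mono r \<and> u\<^sub>s \<in> weak_seq_closure W\<^sub>\<theta> \<and> weak_conv (w \<circ> r) u\<^sub>s"
  proof -
    have "z \<in> weak_seq_closure W\<^sub>\<theta>" unfolding weak_seq_closure_def
      using wc' w_in by (intro CollectI exI[of _ "w \<circ> r'"]) auto
    thus ?thesis using r' wc' by blast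
  qed
  have part2: "ereal (ON (u - us)) \<le> I" if sr: "strict_mono s" and wcs: "weak_conv (w \<circ> s) us" for s us
  proof -
    have minis: "(\<lambda>n. ereal (ON (u - w (s n)))) \<longlonglongrightarrow> I"
      using LIMSEQ_subseq_LIMSEQ[OF mini sr] by (simp add: o_def)
    have elem: "ereal (A (u - us) v / norm v) \<le> I" if v: "v \<in> Vs" for v
    proof -
      have bl: "bounded_linear (\<lambda>x. A x v)" by (rule A.bounded_linear_left)
      have "(\<lambda>n. A ((w \<circ> s) n) v) \<longlonglongrightarrow> A us v"
        using wcs bl unfolding weak_conv_def by blast
      hence "(\<lambda>n. (A u v - A (w (s n)) v) / norm v) \<longlonglongrightarrow> (A u v - A us v) / norm v"
        using v unfolding Vs_def by (intro tendsto_intros) (auto simp: o_def)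
      hence lim1: "(\<lambda>n. ereal ((A u v - A (w (s n)) v) / norm v)) \<longlonglongrightarrow> ereal ((A u v - A us v) / norm v)"
        by (rule tendsto_ereal)
      have le1: "\<forall>n. ereal ((A u v - A (w (s n)) v) / norm v) \<le> ereal (ON (u - w (s n)))"
        using L1[OF v] by (metis A.diff_left ereal_less_eq(3))
      have "ereal ((A u v - A us v) / norm v) \<le> I"
        using le1 by (intro LIMSEQ_le[OF lim1 minis]) auto
      thus ?thesis by (simp add: A.diff_left)
    qed
    from Vs_ne obtain v0 where v0: "v0 \<in> Vs" by auto
    have "I \<noteq> -\<infinity>" using elem[OF v0] by auto
    show ?thesis
    proof (cases I)
      case (real t)
      have "ON (u - us) \<le> t" unfolding ON_eq
        using elem real by (intro cSUP_least[OF Vs_ne]) auto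
      thus ?thesis using real by simp
    next
      case PInf thus ?thesis by simp
    next
      case MInf thus ?thesis using \<open>I \<noteq> -\<infinity>\<close> by simp
    qed
  qed
  show ?thesis using part1 part2 unfolding I_def ON_def by blast
qed

end
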